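(* Consider the following model. Constants $\alpha,\beta\in[0,1]$ satisfy $0<\alpha+\beta\le 1$ and $\alpha\ge\beta$; let $\eta=\frac{\alpha}{1-\beta}$. An agent has innate opinion $x_0\in[-1,1]$, and at every time $k=0,1,2,\dots$ the platform recommends the same content $u_k=u_0\in[-1,1]$. The agent chooses $\mathrm{clk}_k\in\{0,1\}$, and its opinion evolves by $$x_{k}=\begin{cases}\alpha x_0+\beta x_{k-1}+(1-\alpha-\beta)u_{k-1}, & \mathrm{clk}_{k-1}=1,\\ \frac{\alpha}{\alpha+\beta}x_0+\frac{\beta}{\alpha+\beta}x_{k-1}, & \mathrm{clk}_{k-1}=0.\end{cases}$$ Time is divided into consecutive blocks of length $s\in\mathbb{N}$, $s\ge1$, block $i\ge0$ consisting of times $is,\dots,is+s-1$; in block $i$ the agent clicks at times $is,\dots,is+T_i-1$ and does not click at the remaining times of the block. Let $T_0=s$, and let $x_i^{(p)}:=x_{is}$ be the opinion at the beginning of block $i$ under policy $p$, where: - policy 1 (fixed): $T_i=T_0$ for all $i$; - policy 2 (decreasing): given $\kappa>1$, $T_{i+1}=\lfloor T_i/\kappa\rfloor$; - policy 3 (adaptive decreasing): given an integer $\tau\ge1$ and $x_{\text{drift}}>0$, $T_{i+1}=\max\{0,T_i-\tau\}$ if $|x_{(i+1)s}-x_0|\ge x_{\text{drift}}$, and $T_{i+1}=T_i$ otherwise. Then: (a) $\lim_{i\to\infty}x_i^{(1)}=\eta x_0+(1-\eta)u_0$; (b) $\lim_{i\to\infty}x_i^{(2)}=x_0$; (c) if $x_0<u_0$,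 then $x_0\le\lim_{i\to\infty}x_i^{(3)}\le\min\{1,x_0+x_{\text{drift}}\}$; otherwise $\max\{-1,x_0-x_{\text{drift}}\}\le\lim_{i\to\infty}x_i^{(3)}\le x_0$.
   Context: The model describes an agent interacting with a recommendation platform that always recommends the same content $u_0$; $\mathrm{clk}_k=1$ means the agent consumes the recommended content at time $k$. *)

theory Defs
  imports Complex_Main
begin

definition opinion_step :: "real \<Rightarrow> real \<Rightarrow> real \<Rightarrow> real \<Rightarrow> bool \<Rightarrow> real \<Rightarrow> real" where
  "opinion_step \<alpha> \<beta> x0 u0 clk y =
     (if clk then \<alpha> * x0 + \<beta> * y + (1 - \<alpha> - \<beta>) * u0
      else \<alpha> / (\<alpha> + \<beta>) * x0 + \<beta> / (\<alpha> + \<beta>) * y)"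

definition block_click :: "nat \<Rightarrow> (nat \<Rightarrow> nat) \<Rightarrow> nat \<Rightarrow> bool" where
  "block_click s T k \<longleftrightarrow> k mod s < T (k div s)"

definition trajectory :: "real \<Rightarrow> real \<Rightarrow> real \<Rightarrow> real \<Rightarrow> nat \<Rightarrow> (nat \<Rightarrow> nat) \<Rightarrow> (nat \<Rightarrow> real) \<Rightarrow> bool" where
  "trajectory \<alpha> \<beta> x0 u0 s T x \<longleftrightarrow>
     x 0 = x0 \<and> (\<forall>k. x (Suc k) = opinion_step \<alpha> \<beta> x0 u0 (block_click s T k) (x k))"

end

theory Submission
  imports Defs
begin

lemma convex3:
  fixes a b c p q r m M :: real
  assumes "0 \<le> a" "0 \<le> b" "0 \<le> c" "a + b + c = 1"
    and "m \<le> p" "m \<le> q" "m \<le> r" "p \<le> M" "q \<le> M" "r \<le> M"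
  shows "m \<le> a*p + b*q + c*r \<and> a*p + b*q + c*r \<le> M"
proof -
  have "a*m \<le> a*p" "b*m \<le> b*q" "c*m \<le> c*r"
    using assms by (auto intro: mult_left_mono)
  moreover have "a*p \<le> a*M" "b*q \<le> b*M" "c*r \<le> c*M"
    using assms by (auto intro: mult_left_mono)
  moreover have "(a+b+c)*m = m" "(a+b+c)*M = M" using assms(4) by simp_all
  ultimately show ?thesis by (simp add: algebra_simps)
qed

lemma traj_step:
  assumes "trajectory \<alpha> \<beta> x0 u0 s T x"
  shows "x (Suc k) = opinion_step \<alpha> \<beta> x0 u0 (block_click s T k) (x k)"
  using assms unfolding trajectory_def by blast

lemma traj_range:
  assumes "0 \<le> \<alpha>" "0 \<le> \<beta>" "0 < \<alpha>+\<beta>" "\<alpha>+\<beta> \<le> 1" "trajectory \<alpha> \<beta> x0 u0 s T x"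
  shows "min x0 u0 \<le> x k \<and> x k \<le> max x0 u0"
proof (induction k)
  case 0 from assms(5) show ?case by (simp add: trajectory_def)
next
  case (Suc k)
  note e = traj_step[OF assms(5), of k]
  show ?case
  proof (cases "block_click s T k")
    case True
    then have "x (Suc k) = \<alpha>*x0 + \<beta>*x k + (1-\<alpha>-\<beta>)*u0" using e by (simp add: opinion_step_def)
    then show ?thesis
      by (simp only:) (rule convex3, use Suc.IH assms in auto)
  next
    case False
    then have "x (Suc k) = \<alpha>/(\<alpha>+\<beta>)*x0 + \<beta>/(\<alpha>+\<beta>)*x k + 0*u0" using e by (simp add: opinion_step_def)
    moreover have "\<alpha>/(\<alpha>+\<beta>) + \<beta>/(\<alpha>+\<beta>) + 0 = 1" using assms(3) by (simp add: add_divide_distrib[symmetric])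
    ultimately show ?thesis
      by (simp only:) (rule convex3, use Suc.IH assms in auto)
  qed
qed

lemma step_contract:
  assumes "0 \<le> \<beta>" "\<beta> \<le> \<alpha>" "0 < \<alpha>+\<beta>" "\<alpha>+\<beta> \<le> 1"
  shows "\<bar>opinion_step \<alpha> \<beta> x0 u0 c y - opinion_step \<alpha> \<beta> x0 u0 c y'\<bar> \<le> 1/2 * \<bar>y - y'\<bar>"
proof (cases c)
  case True
  have "opinion_step \<alpha> \<beta> x0 u0 c y - opinion_step \<alpha> \<beta> x0 u0 c y' = \<beta> * (y - y')"
    using True by (simp add: opinion_step_def algebra_simps)
  then have "\<bar>opinion_step \<alpha> \<beta> x0 u0 c y - opinion_step \<alpha> \<beta> x0 u0 c y'\<bar> = \<beta> * \<bar>y - y'\<bar>"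
    using assms by (simp add: abs_mult)
  also have "\<dots> \<le> 1/2 * \<bar>y - y'\<bar>" using assms by (intro mult_right_mono) auto
  finally show ?thesis .
next
  case False
  have "opinion_step \<alpha> \<beta> x0 u0 c y - opinion_step \<alpha> \<beta> x0 u0 c y' = \<beta>/(\<alpha>+\<beta>) * (y - y')"
    using False by (simp add: opinion_step_def algebra_simps diff_divide_distrib)
  then have "\<bar>opinion_step \<alpha> \<beta> x0 u0 c y - opinion_step \<alpha> \<beta> x0 u0 c y'\<bar> = \<beta>/(\<alpha>+\<beta>) * \<bar>y - y'\<bar>"
    using assms by (simp add: abs_mult)
  also have "\<dots> \<le> 1/2 * \<bar>y - y'\<bar>" using assms by (intro mult_right_mono) (auto simp: divide_simps)
  finally show ?thesis .
qed

lemma noclick_limit: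
  assumes "0 \<le> \<beta>" "\<beta> \<le> \<alpha>" "0 < \<alpha>+\<beta>" "\<alpha>+\<beta> \<le> 1" "s \<ge> 1"
    and "\<forall>i\<ge>N. T i = 0" "trajectory \<alpha> \<beta> x0 u0 s T x"
  shows "(\<lambda>i. x (i * s)) \<longlonglongrightarrow> x0"
proof -
  define r where "r = \<beta>/(\<alpha>+\<beta>)"
  define M where "M = N * s"
  have r: "0 \<le> r" "r < 1" using assms by (auto simp: r_def divide_simps)
  have st: "x (Suc k) - x0 = r * (x k - x0)" if "k \<ge> M" for k
  proof -
    have "N \<le> k div s" using that assms(5) unfolding M_def
      by (metis div_le_mono nonzero_mult_div_cancel_right not_one_le_zero)
    then have "\<not> block_click s T k" using assms(6) by (simp add: block_click_def)
    then have "x (Suc k) = \<alpha>/(\<alpha>+\<beta>)*x0 + \<beta>/(\<alpha>+\<beta>)*x k"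
      using traj_step[OF assms(7), of k] by (simp add: opinion_step_def)
    moreover have "\<alpha>/(\<alpha>+\<beta>) = 1 - r" using assms(3) by (simp add: r_def field_simps)
    ultimately have "x (Suc k) = (1-r)*x0 + r * x k" by (simp add: r_def)
    then show ?thesis by (simp add: algebra_simps)
  qed
  have pw: "x (j + M) - x0 = r^j * (x M - x0)" for j
    by (induction j) (auto simp: st)
  have "(\<lambda>j. r^j * (x M - x0)) \<longlonglongrightarrow> 0 * (x M - x0)"
    by (intro tendsto_mult LIMSEQ_power_zero tendsto_const) (use r in auto)
  then have "(\<lambda>j. x (j + M) - x0 + x0) \<longlonglongrightarrow> 0 + x0"
    unfolding pw by (intro tendsto_add tendsto_const) simp
  then have "(\<lambda>j. x (j + M)) \<longlonglongrightarrow> x0" by simp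
  then have lim: "x \<longlonglongrightarrow> x0" by (rule LIMSEQ_offset)
  have "strict_mono (\<lambda>i. i * s)" using assms(5) by (intro strict_monoI) simp
  from LIMSEQ_subseq_LIMSEQ[OF lim this] show ?thesis by (simp add: o_def)
qed

lemma const_conv:
  assumes "0 \<le> \<beta>" "\<beta> \<le> \<alpha>" "0 < \<alpha>+\<beta>" "\<alpha>+\<beta> \<le> 1" "s \<ge> 1"
    and "\<forall>i\<ge>N. T i = c" "trajectory \<alpha> \<beta> x0 u0 s T x"
  shows "\<exists>L. (\<lambda>i. x (i * s)) \<longlonglongrightarrow> L"
proof -
  define d where "d k = x (k + s) - x k" for k
  define M where "M = N * s"
  have clk: "block_click s T (k + s) = block_click s T k" if "k \<ge> M" for k
  proof -
    have "N \<le> k div s" using that assms(5) unfolding M_def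
      by (metis div_le_mono nonzero_mult_div_cancel_right not_one_le_zero)
    moreover have "(k + s) div s = Suc (k div s)" "(k + s) mod s = k mod s" using assms(5) by auto
    ultimately show ?thesis using assms(6) by (simp add: block_click_def)
  qed
  have dstep: "\<bar>d (Suc k)\<bar> \<le> 1/2 * \<bar>d k\<bar>" if "k \<ge> M" for k
  proof -
    have "d (Suc k) = opinion_step \<alpha> \<beta> x0 u0 (block_click s T k) (x (k+s))
        - opinion_step \<alpha> \<beta> x0 u0 (block_click s T k) (x k)"
      unfolding d_def using traj_step[OF assms(7), of "k+s"] traj_step[OF assms(7), of k] clk[OF that]
      by simp
    then show ?thesis unfolding d_def using step_contract[OF assms(1-4)] by simp
  qed
  have dpow: "\<bar>d (j + M)\<bar> \<le> (1/2)^j * \<bar>d M\<bar>" for j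
  proof (induction j)
    case 0 then show ?case by simp
  next
    case (Suc j)
    have "\<bar>d (Suc j + M)\<bar> \<le> 1/2 * \<bar>d (j + M)\<bar>" using dstep[of "j+M"] by simp
    also have "\<dots> \<le> 1/2 * ((1/2)^j * \<bar>d M\<bar>)" using Suc by simp
    finally show ?case by simp
  qed
  define e where "e i = x (Suc i * s) - x (i * s)" for i
  have ebound: "norm (e i) \<le> \<bar>d M\<bar> * 2^N * (1/2)^i" if "i \<ge> N" for i
  proof -
    have im: "(i - N) * s + M = i * s" using that unfolding M_def
      by (metis add_mult_distrib le_add_diff_inverse2)
    have ei: "e i = d ((i - N) * s + M)" unfolding im e_def d_def by (simp add: add.commute)
    have "norm (e i) \<le> (1/2)^((i-N)*s) * \<bar>d M\<bar>" using dpow ei by simp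
    also have "\<dots> \<le> (1/2)^(i-N) * \<bar>d M\<bar>"
    proof (rule mult_right_mono)
      have "i - N \<le> (i - N) * s" using assms(5) by simp
      then show "(1/2::real)^((i-N)*s) \<le> (1/2)^(i-N)" by (rule power_decreasing) simp_all
    qed simp
    also have "(1/2::real)^(i-N) = 2^N * (1/2)^i"
    proof -
      have h1: "(1/2::real)^i = (1/2)^(i-N) * (1/2)^N" using that by (simp flip: power_add)
      have h2: "(2::real)^N * (1/2)^N = (2 * (1/2))^N" by (rule power_mult_distrib[symmetric])
      then have h2: "(2::real)^N * (1/2)^N = 1" by simp
      have "(2::real)^N * ((1/2)^(i-N) * (1/2)^N) = (1/2)^(i-N) * (2^N * (1/2)^N)"
        by (simp only: ac_simps)
      then show ?thesis unfolding h1 h2 by simp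
    qed
    finally show ?thesis by (simp add: algebra_simps)
  qed
  have "summable (\<lambda>i. \<bar>d M\<bar> * 2^N * (1/2::real)^i)"
    by (intro summable_mult summable_geometric) simp
  then have "summable e" using ebound by (rule summable_comparison_test') 
  then have "(\<lambda>n. \<Sum>i<n. e i) \<longlonglongrightarrow> suminf e" by (rule summable_LIMSEQ)
  then have "(\<lambda>n. x 0 + (\<Sum>i<n. e i)) \<longlonglongrightarrow> x 0 + suminf e" by (intro tendsto_add tendsto_const)
  moreover have "x 0 + (\<Sum>i<n. e i) = x (n * s)" for n
    unfolding e_def using sum_lessThan_telescope[where f = "\<lambda>i. x (i * s)" and m=n] by simp
  ultimately have "(\<lambda>n. x (n * s)) \<longlonglongrightarrow> x 0 + suminf e" by simp
  then show ?thesis by (rule exI)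
qed

lemma allclick_limit:
  assumes "0 \<le> \<beta>" "\<beta> < 1" "s \<ge> 1"
    and "\<forall>i. T i = s" "trajectory \<alpha> \<beta> x0 u0 s T x"
  shows "(\<lambda>i. x (i * s)) \<longlonglongrightarrow> (\<alpha> / (1 - \<beta>)) * x0 + (1 - \<alpha> / (1 - \<beta>)) * u0"
proof -
  define xs where "xs = (\<alpha> / (1 - \<beta>)) * x0 + (1 - \<alpha> / (1 - \<beta>)) * u0"
  have xs: "(1 - \<beta>) * xs = \<alpha> * x0 + (1 - \<alpha> - \<beta>) * u0"
  proof -
    have a: "(1-\<beta>)*(\<alpha>/(1-\<beta>)) = \<alpha>" using assms(2) by simp
    have "(1-\<beta>)*xs = (1-\<beta>)*(\<alpha>/(1-\<beta>))*x0 + ((1-\<beta>) - (1-\<beta>)*(\<alpha>/(1-\<beta>)))*u0"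
      unfolding xs_def by (simp add: algebra_simps)
    then show ?thesis unfolding a by (simp add: algebra_simps)
  qed
  have st: "x (Suc k) - xs = \<beta> * (x k - xs)" for k
  proof -
    have "block_click s T k" using assms(3,4) by (simp add: block_click_def)
    then have "x (Suc k) = \<alpha> * x0 + \<beta> * x k + (1 - \<alpha> - \<beta>) * u0"
      using traj_step[OF assms(5), of k] by (simp add: opinion_step_def)
    then show ?thesis using xs by (simp add: algebra_simps)
  qed
  define c where "c = x 0 - xs"
  have pw: "x j - xs = \<beta>^j * c" for j
    by (induction j) (auto simp: st c_def)
  have "(\<lambda>j. \<beta>^j * c) \<longlonglongrightarrow> 0 * c"
    by (intro tendsto_mult LIMSEQ_power_zero tendsto_const) (use assms in auto)
  then have "(\<lambda>j. x j - xs + xs) \<longlonglongrightarrow> 0 + xs"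
    unfolding pw by (intro tendsto_add tendsto_const) simp
  then have lim: "x \<longlonglongrightarrow> xs" by simp
  have "strict_mono (\<lambda>i. i * s)" using assms(3) by (intro strict_monoI) simp
  from LIMSEQ_subseq_LIMSEQ[OF lim this] show ?thesis by (simp add: o_def xs_def)
qed


theorem corollary1:
  fixes \<alpha> \<beta> x0 u0 \<kappa> x_drift :: real
    and s \<tau> :: nat
    and T1 T2 T3 :: "nat \<Rightarrow> nat"
    and x1 x2 x3 :: "nat \<Rightarrow> real"
  assumes "0 \<le> \<alpha>" "\<alpha> \<le> 1" "0 \<le> \<beta>" "\<beta> \<le> 1"
    and "0 < \<alpha> + \<beta>" "\<alpha> + \<beta> \<le> 1" "\<alpha> \<ge> \<beta>"
    and "-1 \<le> x0" "x0 \<le> 1" "-1 \<le> u0" "u0 \<le> 1"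
    and "s \<ge> 1"
    and "\<kappa> > 1" "\<tau> \<ge> 1" "x_drift > 0"
    \<comment> \<open>policy 1: fixed\<close>
    and "\<forall>i. T1 i = s"
    and "trajectory \<alpha> \<beta> x0 u0 s T1 x1"
    \<comment> \<open>policy 2: decreasing\<close>
    and "T2 0 = s"
    and "\<forall>i. T2 (Suc i) = nat \<lfloor>real (T2 i) / \<kappa>\<rfloor>"
    and "trajectory \<alpha> \<beta> x0 u0 s T2 x2"
    \<comment> \<open>policy 3: adaptive decreasing (nat subtraction is max 0 (T - tau))\<close>
    and "T3 0 = s"
    and "\<forall>i. T3 (Suc i) = (if \<bar>x3 ((Suc i) * s) - x0\<bar> \<ge> x_drift then T3 i - \<tau> else T3 i)"
    and "trajectory \<alpha> \<beta> x0 u0 s T3 x3"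
  shows "(\<lambda>i. x1 (i * s)) \<longlonglongrightarrow> (\<alpha> / (1 - \<beta>)) * x0 + (1 - \<alpha> / (1 - \<beta>)) * u0
       \<and> (\<lambda>i. x2 (i * s)) \<longlonglongrightarrow> x0
       \<and> (\<exists>L. (\<lambda>i. x3 (i * s)) \<longlonglongrightarrow> L \<and>
            (if x0 < u0 then x0 \<le> L \<and> L \<le> min 1 (x0 + x_drift)
             else max (-1) (x0 - x_drift) \<le> L \<and> L \<le> x0))"
proof -
  note A = assms
  have b1: "\<beta> < 1" using A by linarith
  have s1: "s \<ge> 1" using A by simp
  have P1: "(\<lambda>i. x1 (i * s)) \<longlonglongrightarrow> (\<alpha> / (1 - \<beta>)) * x0 + (1 - \<alpha> / (1 - \<beta>)) * u0"
    by (rule allclick_limit[OF A(3) b1 s1 A(16) A(17)])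
  have dec2: "T2 (Suc i) \<le> T2 i - 1" for i
  proof (cases "T2 i = 0")
    case True then show ?thesis using A(19) by simp
  next
    case False
    have "real (T2 i) / \<kappa> < real (T2 i)" using False A(13) by (simp add: divide_less_eq)
    then have "\<lfloor>real (T2 i) / \<kappa>\<rfloor> < int (T2 i)" by linarith
    then show ?thesis using A(19) False by simp
  qed
  have le2: "T2 i \<le> s - i" for i
  proof (induction i)
    case 0 then show ?case using A(18) by simp
  next
    case (Suc i) then show ?case using dec2[of i] by simp
  qed
  have "\<forall>i\<ge>s. T2 i = 0" using le2 by (metis diff_is_0_eq le_zero_eq)
  then have P2: "(\<lambda>i. x2 (i * s)) \<longlonglongrightarrow> x0"
    by (rule noclick_limit[OF A(3) A(7) A(5) A(6) s1 _ A(20)])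
  obtain N where N: "\<forall>j. T3 N \<le> T3 j" using ex_has_least_nat[of "\<lambda>_. True" 0 T3] by blast
  have mono3: "T3 j \<le> T3 i" if "i \<le> j" for i j
    using that
  proof (induction j rule: dec_induct)
    case base then show ?case by simp
  next
    case (step j) then show ?case using A(22) by (metis diff_le_self order_trans)
  qed
  define c where "c = T3 N"
  have const3: "\<forall>i\<ge>N. T3 i = c" using N mono3 c_def by (metis le_antisym)
  obtain L where L: "(\<lambda>i. x3 (i * s)) \<longlonglongrightarrow> L"
    using const_conv[OF A(3) A(7) A(5) A(6) s1 const3 A(23)] by blast
  have rng: "min x0 u0 \<le> x3 (i * s) \<and> x3 (i * s) \<le> max x0 u0" for i
    by (rule traj_range[OF A(1) A(3) A(5) A(6) A(23)])
  have Llo: "min x0 u0 \<le> L" using L rng by (intro LIMSEQ_le_const[OF L]) blast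
  have Lhi: "L \<le> max x0 u0" using L rng by (intro LIMSEQ_le_const2[OF L]) blast
  have Lx: "L = x0 \<or> \<bar>L - x0\<bar> \<le> x_drift"
  proof (cases "c = 0")
    case True
    then have "(\<lambda>i. x3 (i * s)) \<longlonglongrightarrow> x0"
      using noclick_limit[OF A(3) A(7) A(5) A(6) s1 _ A(23)] const3 by blast
    then show ?thesis using L LIMSEQ_unique by blast
  next
    case False
    have small: "\<bar>x3 (Suc i * s) - x0\<bar> \<le> x_drift" if "i \<ge> N" for i
    proof (rule ccontr)
      assume "\<not> ?thesis"
      then have "T3 (Suc i) = T3 i - \<tau>" using A(22) by simp
      moreover have "T3 (Suc i) = c" "T3 i = c" using const3 that by auto
      ultimately show False using False A(14) by linarith
    qed
    have "(\<lambda>i. \<bar>x3 (Suc i * s) - x0\<bar>) \<longlonglongrightarrow> \<bar>L - x0\<bar>"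
      using LIMSEQ_Suc[OF L] by (intro tendsto_rabs tendsto_diff tendsto_const) simp
    then have "\<bar>L - x0\<bar> \<le> x_drift" using small by (intro LIMSEQ_le_const2) blast+
    then show ?thesis by simp
  qed
  have P3: "if x0 < u0 then x0 \<le> L \<and> L \<le> min 1 (x0 + x_drift)
             else max (-1) (x0 - x_drift) \<le> L \<and> L \<le> x0"
    using Llo Lhi Lx A(8-11) A(15) by (auto simp: min_def max_def split: if_splits)
  show ?thesis using P1 P2 L P3 by blast
qed

end
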